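(* Let $G$ be a finite simple group. Then for every positive integer $n$ divisible by $|G|^2$, there exists $s\in G\backslash\operatorname{Sur}_1(F_n,G)$ such that the image in $S_n$ of the stabilizer of $s$ in $B_n$ contains an $n$-cycle.
   Context: $\operatorname{Sur}_1(F_n,G)$ is the set of $(g_1,\dots,g_n)\in G^n$ with $\langle g_1,\dots,g_n\rangle=G$ and $g_1\cdots g_n=1$; $G\backslash\operatorname{Sur}_1(F_n,G)$ is its set of orbits under simultaneous conjugation $(g_i)\mapsto(gg_ig^{-1})$. $B_n$ acts on it from the right via $(\dots,g_i,g_{i+1},\dots)^{\sigma_i}=(\dots,g_{i+1},g_{i+1}^{-1}g_ig_{i+1},\dots)$, and $B_n\to S_n$ sends $\sigma_i\mapsto(i\ i+1)$. *)

theory Defs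
  imports "HOL-Algebra.SimpleGroups" "HOL-Algebra.Generated_Groups"
begin

text \<open>Tuples in G^n are lists of length n (0-indexed). The product g_1 ... g_n.\<close>
definition tuple_prod :: "('a, 'b) monoid_scheme \<Rightarrow> 'a list \<Rightarrow> 'a" where
  "tuple_prod G gs = foldr (\<lambda>x y. x \<otimes>\<^bsub>G\<^esub> y) gs \<one>\<^bsub>G\<^esub>"

definition Sur1 :: "('a, 'b) monoid_scheme \<Rightarrow> nat \<Rightarrow> 'a list set" where
  "Sur1 G n = {gs. length gs = n \<and> set gs \<subseteq> carrier G
      \<and> generate G (set gs) = carrier G \<and> tuple_prod G gs = \<one>\<^bsub>G\<^esub>}"

definition conj_orbit :: "('a, 'b) monoid_scheme \<Rightarrow> 'a list \<Rightarrow> 'a list set" where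
  "conj_orbit G gs = {map (\<lambda>x. h \<otimes>\<^bsub>G\<^esub> x \<otimes>\<^bsub>G\<^esub> inv\<^bsub>G\<^esub> h) gs | h. h \<in> carrier G}"

definition Sur1_quot :: "('a, 'b) monoid_scheme \<Rightarrow> nat \<Rightarrow> 'a list set set" where
  "Sur1_quot G n = conj_orbit G ` Sur1 G n"

text \<open>Braid words: a letter (i, True) stands for sigma_(i+1), (i, False) for its inverse
  (0-indexed). A word is a word in B_n if every letter has i + 1 < n.\<close>
type_synonym braid_word = "(nat \<times> bool) list"

definition braid_word_in :: "nat \<Rightarrow> braid_word \<Rightarrow> bool" where
  "braid_word_in n w \<longleftrightarrow> (\<forall>(i, b) \<in> set w. Suc i < n)"

definition braid_gen_act :: "('a, 'b) monoid_scheme \<Rightarrow> nat \<times> bool \<Rightarrow> 'a list \<Rightarrow> 'a list" where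
  "braid_gen_act G l gs = (case l of (i, b) \<Rightarrow>
     (if b then gs[i := gs ! Suc i,
                   Suc i := inv\<^bsub>G\<^esub> (gs ! Suc i) \<otimes>\<^bsub>G\<^esub> gs ! i \<otimes>\<^bsub>G\<^esub> gs ! Suc i]
      else gs[i := gs ! i \<otimes>\<^bsub>G\<^esub> gs ! Suc i \<otimes>\<^bsub>G\<^esub> inv\<^bsub>G\<^esub> (gs ! i),
              Suc i := gs ! i]))"

text \<open>Right action of a word: x^(w1 w2) = (x^w1)^w2, letters applied left to right.\<close>
definition braid_act :: "('a, 'b) monoid_scheme \<Rightarrow> braid_word \<Rightarrow> 'a list \<Rightarrow> 'a list" where
  "braid_act G w gs = fold (braid_gen_act G) w gs"

definition braid_act_orbit :: "('a, 'b) monoid_scheme \<Rightarrow> braid_word \<Rightarrow> 'a list set \<Rightarrow> 'a list set" where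
  "braid_act_orbit G w S = braid_act G w ` S"

definition braid_perm :: "braid_word \<Rightarrow> nat \<Rightarrow> nat" where
  "braid_perm w = foldr (\<lambda>(i, b) p. (\<lambda>x. if x = i then Suc i else if x = Suc i then i else x) \<circ> p) w id"

definition is_n_cycle :: "nat \<Rightarrow> (nat \<Rightarrow> nat) \<Rightarrow> bool" where
  "is_n_cycle n p \<longleftrightarrow> bij_betw p {0..<n} {0..<n} \<and> (\<forall>x. x \<ge> n \<longrightarrow> p x = x)
     \<and> 0 < n \<and> {(p ^^ k) 0 | k. True} = {0..<n}"

end

theory Submission
  imports Defs "HOL-Algebra.Multiplicative_Group"
begin


definition tr :: "nat \<Rightarrow> nat \<Rightarrow> nat" where
  "tr k = (\<lambda>x. if x = k then Suc k else if x = Suc k then k else x)"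
definition sw :: "nat \<Rightarrow> nat \<Rightarrow> nat \<Rightarrow> nat" where
  "sw i j = (\<lambda>x. if x = i then j else if x = j then i else x)"
definition winv :: "braid_word \<Rightarrow> braid_word" where
  "winv w = rev (map (\<lambda>(k,b). (k, \<not>b)) w)"

lemma braid_perm_alt: "braid_perm w = foldr (\<lambda>l p. tr (fst l) \<circ> p) w id"
  unfolding braid_perm_def tr_def
  by (induction w) (auto split: prod.splits)

lemma braid_perm_Nil[simp]: "braid_perm [] = id"
  by (simp add: braid_perm_alt)
lemma braid_perm_Cons[simp]: "braid_perm ((i,b) # w) = tr i \<circ> braid_perm w"
  by (simp add: braid_perm_alt)
lemma braid_perm_append: "braid_perm (w1 @ w2) = braid_perm w1 \<circ> braid_perm w2"
proof (induction w1)
  case Nil then show ?case by simp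
next
  case (Cons l w1) then show ?case by (cases l) (simp add: o_assoc)
qed

lemma braid_act_append: "braid_act G (w1 @ w2) x = braid_act G w2 (braid_act G w1 x)"
  by (simp add: braid_act_def)
lemma braid_act_Nil[simp]: "braid_act G [] x = x"
  by (simp add: braid_act_def)
lemma braid_act_Cons[simp]: "braid_act G (l # w) x = braid_act G w (braid_gen_act G l x)"
  by (simp add: braid_act_def)

lemma braid_word_in_append[simp]: "braid_word_in n (w1 @ w2) \<longleftrightarrow> braid_word_in n w1 \<and> braid_word_in n w2"
  by (auto simp: braid_word_in_def)
lemma braid_word_in_Cons[simp]: "braid_word_in n ((i,b) # w) \<longleftrightarrow> Suc i < n \<and> braid_word_in n w"
  by (auto simp: braid_word_in_def)
lemma braid_word_in_Nil[simp]: "braid_word_in n []"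
  by (auto simp: braid_word_in_def)
lemma braid_word_in_winv[simp]: "braid_word_in n (winv w) \<longleftrightarrow> braid_word_in n w"
  by (auto simp: braid_word_in_def winv_def)

lemma perm_cyc:
  assumes "i \<le> l"
  shows "braid_perm (map (\<lambda>k. (k, P k)) [i..<l]) = (\<lambda>y. if i \<le> y \<and> y < l then Suc y else if y = l then i else y)"
  using assms
proof (induction l)
  case 0 then show ?case by (auto simp: fun_eq_iff)
next
  case (Suc l)
  show ?case
  proof (cases "i = Suc l")
    case True then show ?thesis by (auto simp: fun_eq_iff)
  next
    case False
    then have "i \<le> l" using Suc by auto
    then show ?thesis using Suc.IH by (simp add: braid_perm_append) (auto simp: fun_eq_iff tr_def)
  qed
qed

lemma perm_cyc_inv:
  assumes "i \<le> l"
  shows "braid_perm (winv (map (\<lambda>k. (k, P k)) [i..<l])) = (\<lambda>y. if i < y \<and> y \<le> l then y - 1 else if y = i then l else y)"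
  using assms
proof (induction l)
  case 0 then show ?case by (auto simp: fun_eq_iff winv_def)
next
  case (Suc l)
  show ?case
  proof (cases "i = Suc l")
    case True then show ?thesis by (auto simp: fun_eq_iff winv_def)
  next
    case False
    then have "i \<le> l" using Suc by auto
    then show ?thesis using Suc.IH by (simp add: braid_perm_append winv_def) (auto simp: fun_eq_iff tr_def)
  qed
qed

context group begin

lemma gen_len[simp]: "length (braid_gen_act G l xs) = length xs"
  by (cases l) (simp add: braid_gen_act_def)
lemma act_len[simp]: "length (braid_act G w xs) = length xs"
  by (induction w arbitrary: xs) auto

lemma cancel1[simp]: "x \<in> carrier G \<Longrightarrow> y \<in> carrier G \<Longrightarrow> x \<otimes> (inv x \<otimes> y) = y"
  by (simp add: m_assoc[symmetric])
lemma cancel2[simp]: "x \<in> carrier G \<Longrightarrow> y \<in> carrier G \<Longrightarrow> inv x \<otimes> (x \<otimes> y) = y"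
  by (simp add: m_assoc[symmetric])

lemma nth_carrier: "set xs \<subseteq> carrier G \<Longrightarrow> k < length xs \<Longrightarrow> xs ! k \<in> carrier G"
  using nth_mem by blast

lemma gen_carrier:
  assumes "set xs \<subseteq> carrier G" "Suc i < length xs"
  shows "set (braid_gen_act G (i,b) xs) \<subseteq> carrier G"
proof -
  have a: "xs ! i \<in> carrier G" "xs ! Suc i \<in> carrier G" using assms nth_carrier by auto
  show ?thesis unfolding braid_gen_act_def
    using assms a by (cases b) (simp_all, (intro set_update_subsetI; simp)+)
qed

lemma act_carrier:
  "braid_word_in (length xs) w \<Longrightarrow> set xs \<subseteq> carrier G \<Longrightarrow> set (braid_act G w xs) \<subseteq> carrier G"
proof (induction w arbitrary: xs)
  case Nil then show ?case by simp
next
  case (Cons l w)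
  obtain i b where l: "l = (i,b)" by (cases l)
  have "set (braid_gen_act G (i,b) xs) \<subseteq> carrier G" using Cons.prems l gen_carrier by auto
  then show ?case using Cons l by simp
qed

lemma gen_inv:
  assumes "set xs \<subseteq> carrier G" "Suc i < length xs"
  shows "braid_gen_act G (i, \<not>b) (braid_gen_act G (i,b) xs) = xs"
proof -
  have a: "xs ! i \<in> carrier G" "xs ! Suc i \<in> carrier G" using assms nth_carrier by auto
  show ?thesis
  proof (rule nth_equalityI)
    fix k assume "k < length (braid_gen_act G (i, \<not> b) (braid_gen_act G (i, b) xs))"
    then show "braid_gen_act G (i, \<not> b) (braid_gen_act G (i, b) xs) ! k = xs ! k"
      using assms a by (cases b) (auto simp: braid_gen_act_def nth_list_update m_assoc)
  qed simp
qed

lemma act_inv: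
  "braid_word_in (length xs) w \<Longrightarrow> set xs \<subseteq> carrier G \<Longrightarrow> braid_act G (winv w) (braid_act G w xs) = xs"
proof (induction w arbitrary: xs)
  case Nil then show ?case by (simp add: winv_def)
next
  case (Cons l w)
  obtain i b where l: "l = (i,b)" by (cases l)
  have c: "set (braid_gen_act G (i,b) xs) \<subseteq> carrier G" using Cons.prems l gen_carrier by auto
  have wi: "winv ((i,b) # w) = winv w @ [(i, \<not>b)]" by (simp add: winv_def)
  have "braid_act G (winv ((i,b) # w)) (braid_act G ((i,b) # w) xs)
      = braid_gen_act G (i, \<not>b) (braid_act G (winv w) (braid_act G w (braid_gen_act G (i,b) xs)))"
    by (simp only: wi braid_act_append) simp
  also have "\<dots> = braid_gen_act G (i, \<not>b) (braid_gen_act G (i,b) xs)"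
    using Cons c l by simp
  also have "\<dots> = xs" using gen_inv Cons.prems l by auto
  finally show ?case using l by simp
qed

definition cj :: "'a \<Rightarrow> 'a \<Rightarrow> 'a" where "cj h y = h \<otimes> y \<otimes> inv h"

lemma cj_mult: "h \<in> carrier G \<Longrightarrow> a \<in> carrier G \<Longrightarrow> b \<in> carrier G \<Longrightarrow> cj h a \<otimes> cj h b = cj h (a \<otimes> b)"
  by (simp add: cj_def m_assoc)
lemma cj_inv: "h \<in> carrier G \<Longrightarrow> a \<in> carrier G \<Longrightarrow> inv (cj h a) = cj h (inv a)"
  by (simp add: cj_def m_assoc inv_mult_group)

lemma gen_conj:
  assumes "set xs \<subseteq> carrier G" "Suc i < length xs" "h \<in> carrier G"
  shows "braid_gen_act G (i,b) (map (cj h) xs) = map (cj h) (braid_gen_act G (i,b) xs)"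
proof -
  have a: "xs ! i \<in> carrier G" "xs ! Suc i \<in> carrier G" using assms nth_carrier by auto
  show ?thesis
  proof (rule nth_equalityI)
    fix k assume "k < length (braid_gen_act G (i,b) (map (cj h) xs))"
    then show "braid_gen_act G (i,b) (map (cj h) xs) ! k = map (cj h) (braid_gen_act G (i,b) xs) ! k"
      using assms a by (cases b) (auto simp: braid_gen_act_def nth_list_update cj_mult cj_inv)
  qed simp
qed

lemma act_conj:
  "braid_word_in (length xs) w \<Longrightarrow> set xs \<subseteq> carrier G \<Longrightarrow> h \<in> carrier G \<Longrightarrow>
   braid_act G w (map (cj h) xs) = map (cj h) (braid_act G w xs)"
proof (induction w arbitrary: xs)
  case Nil then show ?case by simp
next
  case (Cons l w)
  obtain i b where l: "l = (i,b)" by (cases l)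
  have c: "set (braid_gen_act G (i,b) xs) \<subseteq> carrier G" using Cons.prems l gen_carrier by auto
  show ?case using Cons c l gen_conj by simp
qed

end

lemma perm_conj:
  assumes "i < Suc a"
  shows "(\<lambda>y. if i \<le> y \<and> y < a then Suc y else if y = a then i else y) \<circ> tr a \<circ>
         (\<lambda>y. if i < y \<and> y \<le> a then y - 1 else if y = i then a else y) = sw i (Suc a)"
proof
  fix y
  show "((\<lambda>y. if i \<le> y \<and> y < a then Suc y else if y = a then i else y) \<circ> tr a \<circ>
         (\<lambda>y. if i < y \<and> y \<le> a then y - 1 else if y = i then a else y)) y = sw i (Suc a) y"
  proof -
    consider "y = i" | "y = Suc a" | "i < y \<and> y \<le> a" | "y < i \<or> y > Suc a" using assms by linarith
    then show ?thesis
    proof cases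
      case 1 then show ?thesis using assms by (simp add: tr_def sw_def)
    next
      case 2 then show ?thesis using assms by (simp add: tr_def sw_def)
    next
      case 3 then show ?thesis using assms by (auto simp: tr_def sw_def)
    next
      case 4 then show ?thesis using assms by (auto simp: tr_def sw_def)
    qed
  qed
qed

lemma sw_comp: "i \<noteq> j \<Longrightarrow> j \<noteq> k \<Longrightarrow> i \<noteq> k \<Longrightarrow> sw i j \<circ> sw j k \<circ> sw i j = sw i k"
  by (auto simp: fun_eq_iff sw_def)

lemma sw_sym: "sw i j = sw j i"
  by (auto simp: fun_eq_iff sw_def)

lemma sw_refl: "sw i i = id"
  by (auto simp: fun_eq_iff sw_def)

lemma tr_sw: "tr k = sw k (Suc k)"
  by (auto simp: fun_eq_iff sw_def tr_def)

context group begin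

lemma tp_Nil[simp]: "tuple_prod G [] = \<one>" by (simp add: tuple_prod_def)
lemma tp_Cons[simp]: "tuple_prod G (a # xs) = a \<otimes> tuple_prod G xs" by (simp add: tuple_prod_def)
lemma tp_carrier[simp]: "set xs \<subseteq> carrier G \<Longrightarrow> tuple_prod G xs \<in> carrier G"
  by (induction xs) auto
lemma tp_append: "set xs \<subseteq> carrier G \<Longrightarrow> set ys \<subseteq> carrier G \<Longrightarrow>
    tuple_prod G (xs @ ys) = tuple_prod G xs \<otimes> tuple_prod G ys"
  by (induction xs) (auto simp: m_assoc)
lemma tp_replicate: "c \<in> carrier G \<Longrightarrow> tuple_prod G (replicate k c) = c [^] k"
proof (induction k)
  case (Suc k) then show ?case using nat_pow_Suc2[of c k] nat_pow_Suc[of c k] by simp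
qed simp
lemma tp_ones: "tuple_prod G (map (\<lambda>m. \<one>) xs) = \<one>"
  by (induction xs) auto

lemma tp_interval:
  assumes "a \<le> s" "d \<in> carrier G"
  shows "tuple_prod G (map (\<lambda>m. if s \<le> m \<and> m < s + t then d else \<one>) [a..<b]) = d [^] (min b (s+t) - s)"
proof (induction b)
  case 0 then show ?case by simp
next
  case (Suc b)
  show ?case
  proof (cases "a \<le> b")
    case True
    have sc: "set (map (\<lambda>m. if s \<le> m \<and> m < s + t then d else \<one>) [a..<b]) \<subseteq> carrier G"
      using assms by auto
    have "tuple_prod G (map (\<lambda>m. if s \<le> m \<and> m < s + t then d else \<one>) [a..<Suc b])
        = d [^] (min b (s+t) - s) \<otimes> (if s \<le> b \<and> b < s + t then d else \<one>)"
      using True Suc assms by (simp add: tp_append[OF sc])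
    also have "\<dots> = d [^] (min (Suc b) (s+t) - s)"
    proof (cases "s \<le> b \<and> b < s + t")
      case True
      then have "min (Suc b) (s+t) - s = Suc (min b (s+t) - s)" by auto
      then show ?thesis using True assms by (simp add: nat_pow_Suc)
    next
      case False
      then have "min (Suc b) (s+t) - s = min b (s+t) - s" by auto
      then show ?thesis using False assms by auto
    qed
    finally show ?thesis .
  next
    case False
    then have "min (Suc b) (s+t) - s = 0" using assms by auto
    then show ?thesis using False by simp
  qed
qed

definition qp :: "'a list \<Rightarrow> (nat \<Rightarrow> bool) \<Rightarrow> nat \<Rightarrow> nat \<Rightarrow> 'a" where
  "qp x P i l = tuple_prod G (map (\<lambda>m. if P m then x ! m else \<one>) [Suc i..<Suc l])"

lemma carry:
  assumes "set x \<subseteq> carrier G" "l < length x" "i \<le> l"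
  shows "braid_act G (map (\<lambda>k. (k, P (Suc k))) [i..<l]) x ! l = inv (qp x P i l) \<otimes> x ! i \<otimes> qp x P i l
    \<and> (\<forall>m. l < m \<and> m < length x \<longrightarrow> braid_act G (map (\<lambda>k. (k, P (Suc k))) [i..<l]) x ! m = x ! m)"
  using assms(2,3)
proof (induction l)
  case 0
  then show ?case using assms(1) nth_carrier by (simp add: qp_def)
next
  case (Suc l)
  show ?case
  proof (cases "i = Suc l")
    case True
    then show ?thesis using assms(1) nth_carrier Suc.prems by (simp add: qp_def)
  next
    case False
    then have il: "i \<le> l" using Suc.prems by auto
    define u where "u = map (\<lambda>k. (k, P (Suc k))) [i..<l]"
    define y where "y = braid_act G u x"
    define q where "q = qp x P i l"
    have IH: "y ! l = inv q \<otimes> x ! i \<otimes> q" "\<forall>m. l < m \<and> m < length x \<longrightarrow> y ! m = x ! m"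
      using Suc.IH il Suc.prems unfolding y_def u_def q_def by auto
    have bw: "braid_word_in (length x) u" unfolding u_def braid_word_in_def using Suc.prems by auto
    have yc: "set y \<subseteq> carrier G" unfolding y_def using act_carrier[OF bw assms(1)] .
    have ly: "length y = length x" by (simp add: y_def)
    have qc: "q \<in> carrier G" unfolding q_def qp_def using assms(1) nth_carrier Suc.prems by (auto intro!: tp_carrier)
    have xi: "x ! i \<in> carrier G" "x ! Suc l \<in> carrier G" using assms(1) nth_carrier Suc.prems by auto
    have ysl: "y ! Suc l = x ! Suc l" using IH(2) Suc.prems by auto
    have allc: "\<And>m. m < length x \<Longrightarrow> x ! m \<in> carrier G" using assms(1) nth_carrier by auto
    have sc: "set (map (\<lambda>m. if P m then x ! m else \<one>) [Suc i..<Suc l]) \<subseteq> carrier G"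
      using allc Suc.prems by auto
    have ue: "[Suc i..<Suc (Suc l)] = [Suc i..<Suc l] @ [Suc l]" using il by simp
    have sc2: "set (map (\<lambda>m. if P m then x ! m else \<one>) [Suc l]) \<subseteq> carrier G" using allc Suc.prems by auto
    have q': "qp x P i (Suc l) = q \<otimes> (if P (Suc l) then x ! Suc l else \<one>)"
      unfolding q_def qp_def ue map_append tp_append[OF sc sc2] using il allc Suc.prems
      by (simp del: upt_Suc)
    have eq: "braid_act G (map (\<lambda>k. (k, P (Suc k))) [i..<Suc l]) x = braid_gen_act G (l, P (Suc l)) y"
      using il by (simp add: y_def u_def braid_act_append)
    have Y1: "braid_act G (map (\<lambda>k. (k, P (Suc k))) [i..<Suc l]) x ! Suc l
        = (if P (Suc l) then inv (x ! Suc l) \<otimes> y ! l \<otimes> x ! Suc l else y ! l)"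
      unfolding eq using ly Suc.prems ysl by (auto simp: braid_gen_act_def nth_list_update)
    have Y2: "\<forall>m. Suc l < m \<and> m < length x \<longrightarrow> braid_act G (map (\<lambda>k. (k, P (Suc k))) [i..<Suc l]) x ! m = x ! m"
      unfolding eq using ly Suc.prems IH(2) by (auto simp: braid_gen_act_def nth_list_update)
    have Y3: "(if P (Suc l) then inv (x ! Suc l) \<otimes> y ! l \<otimes> x ! Suc l else y ! l)
        = inv (qp x P i (Suc l)) \<otimes> x ! i \<otimes> qp x P i (Suc l)"
    proof (cases "P (Suc l)")
      case True
      have "inv (q \<otimes> x ! Suc l) \<otimes> x ! i \<otimes> (q \<otimes> x ! Suc l) = inv (x ! Suc l) \<otimes> (inv q \<otimes> x ! i \<otimes> q) \<otimes> x ! Suc l"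
        using qc xi by (simp add: m_assoc inv_mult_group)
      then show ?thesis using True q' IH(1) by simp
    next
      case False
      then show ?thesis using q' IH(1) qc by simp
    qed
    show ?thesis using Y1 Y2 Y3 by simp
  qed
qed

lemma gen_fix:
  assumes "set y \<subseteq> carrier G" "Suc k < length y" "y ! k = y ! Suc k"
  shows "braid_gen_act G (k, b) y = y"
proof -
  have c: "y ! Suc k \<in> carrier G" using assms nth_carrier by auto
  show ?thesis
  proof (rule nth_equalityI)
    fix m assume "m < length (braid_gen_act G (k, b) y)"
    then show "braid_gen_act G (k, b) y ! m = y ! m"
      using assms c by (cases b) (auto simp: braid_gen_act_def nth_list_update m_assoc)
  qed simp
qed

definition rel :: "nat \<Rightarrow> 'a list \<Rightarrow> nat \<Rightarrow> nat \<Rightarrow> bool" where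
  "rel n x i j \<longleftrightarrow> i < n \<and> j < n \<and> (\<exists>w. braid_word_in n w \<and> braid_act G w x = x \<and> braid_perm w = sw i j)"

lemma rel_refl: "i < n \<Longrightarrow> rel n x i i"
  unfolding rel_def by (rule conjI, simp, simp, rule exI[of _ "[]"], simp add: sw_refl)

lemma rel_sym: "rel n x i j \<Longrightarrow> rel n x j i"
  unfolding rel_def using sw_sym by metis

lemma rel_trans:
  assumes "rel n x i j" "rel n x j k" shows "rel n x i k"
proof (cases "i = j \<or> j = k \<or> i = k")
  case True
  then show ?thesis using assms rel_refl unfolding rel_def by blast
next
  case False
  obtain w1 where w1: "braid_word_in n w1" "braid_act G w1 x = x" "braid_perm w1 = sw i j"
    using assms(1) unfolding rel_def by blast
  obtain w2 where w2: "braid_word_in n w2" "braid_act G w2 x = x" "braid_perm w2 = sw j k"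
    using assms(2) unfolding rel_def by blast
  have "braid_perm (w1 @ w2 @ w1) = sw i k"
    using w1 w2 False sw_comp by (simp add: braid_perm_append o_assoc)
  moreover have "braid_act G (w1 @ w2 @ w1) x = x" using w1 w2 by (simp add: braid_act_append)
  ultimately show ?thesis using assms w1 w2 unfolding rel_def
    by (intro conjI exI[of _ "w1 @ w2 @ w1"]) auto
qed

lemma edge:
  assumes x: "length x = n" "set x \<subseteq> carrier G" and ij: "i < j" "j < n"
    and eqj: "x ! j = inv (qp x P i (j - 1)) \<otimes> x ! i \<otimes> qp x P i (j - 1)"
  shows "rel n x i j"
proof -
  obtain a where ja: "j = Suc a" using ij by (cases j) auto
  define u where "u = map (\<lambda>k. (k, P (Suc k))) [i..<j - 1]"
  define w where "w = u @ [(j - 1, True)] @ winv u"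
  have bu: "braid_word_in n u" unfolding u_def braid_word_in_def using ij by auto
  have bw: "braid_word_in n w" unfolding w_def using bu ij by auto
  define y where "y = braid_act G u x"
  have c: "y ! (j - 1) = x ! j" "y ! j = x ! j"
    using carry[of x "j - 1" i P] x ij eqj unfolding y_def u_def by auto
  have yc: "set y \<subseteq> carrier G" unfolding y_def using act_carrier bu x by auto
  have hfix: "braid_gen_act G (j - 1, True) y = y"
    using gen_fix[OF yc, of "j - 1" True] c ij x by (simp add: y_def)
  have act: "braid_act G w x = x"
    unfolding w_def using hfix act_inv[of x u] bu x by (simp add: braid_act_append y_def)
  have "braid_perm w = sw i (Suc a)"
    unfolding w_def u_def ja using ij ja perm_conj[of i a]
    by (simp add: braid_perm_append perm_cyc perm_cyc_inv o_assoc)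
  then have "braid_perm w = sw i j" using ja by simp
  then show ?thesis unfolding rel_def using bw act ij by auto
qed

lemma edge_eq:
  assumes x: "length x = n" "set x \<subseteq> carrier G" and ij: "i < n" "j < n" and eq: "x ! i = x ! j"
  shows "rel n x i j"
proof -
  have "rel n x i j" if "i < j" "j < n" "x ! i = x ! j" for i j
  proof -
    have "qp x (\<lambda>_. False) i (j - 1) = \<one>" unfolding qp_def if_False by (rule tp_ones)
    then show ?thesis using edge[OF x, of i j "\<lambda>_. False"] that x nth_carrier by auto
  qed
  then show ?thesis using eq ij rel_refl rel_sym by (metis linorder_neqE_nat)
qed

lemma edge_int:
  assumes x: "length x = n" "set x \<subseteq> carrier G" and ij: "i < s" "s + t \<le> j" "j < n"
    and d: "d \<in> carrier G" "\<And>m. s \<le> m \<Longrightarrow> m < s + t \<Longrightarrow> x ! m = d"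
    and eqj: "x ! j = inv (d [^] t) \<otimes> x ! i \<otimes> d [^] t"
  shows "rel n x i j"
proof -
  define P where "P m = (s \<le> m \<and> m < s + t)" for m
  have jj: "Suc (j - 1) = j" using ij by auto
  have meq: "map (\<lambda>m. if P m then x ! m else \<one>) [Suc i..<j]
      = map (\<lambda>m. if s \<le> m \<and> m < s + t then d else \<one>) [Suc i..<j]"
    using d by (auto simp: P_def)
  have "qp x P i (j - 1) = d [^] (min j (s + t) - s)"
    unfolding qp_def jj meq using tp_interval[of "Suc i" s d t j] ij d by simp
  also have "min j (s + t) - s = t" using ij by auto
  finally show ?thesis using edge[OF x, of i j P] ij eqj by auto
qed

end



lemma ncycle:
  assumes n: "0 < n"
  shows "is_n_cycle n (\<lambda>y. if y < n - 1 then Suc y else if y = n - 1 then 0 else y)"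
proof -
  define p where "p = (\<lambda>y::nat. if y < n - 1 then Suc y else if y = n - 1 then 0 else y)"
  have p1: "p y = Suc y" if "y < n - 1" for y using that by (simp add: p_def)
  have p2: "p (n - 1) = 0" by (simp add: p_def)
  have p3: "p y = y" if "n \<le> y" for y using that n by (auto simp: p_def)
  have pr: "p y < n" if "y < n" for y using that n by (auto simp: p_def)
  have it: "(p ^^ k) 0 = k" if "k < n" for k
    using that
  proof (induction k)
    case 0 then show ?case by simp
  next
    case (Suc k)
    then have "(p ^^ Suc k) 0 = p k" by simp
    then show ?case using p1[of k] Suc.prems by simp
  qed
  have rng: "(p ^^ k) 0 < n" for k
  proof (induction k)
    case 0 then show ?case using n by simp
  next
    case (Suc k) then show ?case using pr by simp
  qed
  have inj: "inj_on p {0..<n}"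
  proof (rule inj_onI)
    fix u v assume u: "u \<in> {0..<n}" and v: "v \<in> {0..<n}" and e: "p u = p v"
    have cu: "u < n - 1 \<or> u = n - 1" using u by auto
    have cv: "v < n - 1 \<or> v = n - 1" using v by auto
    show "u = v" using cu cv e p1 p2 by (metis Suc_inject nat.distinct(1))
  qed
  have img: "p ` {0..<n} = {0..<n}"
  proof
    show "p ` {0..<n} \<subseteq> {0..<n}" using pr by auto
  next
    show "{0..<n} \<subseteq> p ` {0..<n}"
    proof
      fix y assume y: "y \<in> {0..<n}"
      show "y \<in> p ` {0..<n}"
      proof (cases y)
        case 0
        have "n - 1 \<in> {0..<n}" using n by simp
        then show ?thesis using p2 0 by (metis image_eqI)
      next
        case (Suc z)
        then have "z < n - 1" using y by simp
        then have "p z = y" "z \<in> {0..<n}" using p1 Suc by auto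
        then show ?thesis by (metis image_eqI)
      qed
    qed
  qed
  have orb: "{(p ^^ k) 0 | k. True} = {0..<n}"
  proof
    show "{(p ^^ k) 0 | k. True} \<subseteq> {0..<n}" using rng by auto
  next
    show "{0..<n} \<subseteq> {(p ^^ k) 0 | k. True}"
    proof
      fix y assume "y \<in> {0..<n}"
      then have "(p ^^ y) 0 = y" using it by simp
      then show "y \<in> {(p ^^ k) 0 | k. True}" by (metis (mono_tags, lifting) mem_Collect_eq)
    qed
  qed
  have "is_n_cycle n p" unfolding is_n_cycle_def
    using bij_betw_imageI[OF inj img] orb n p3 by blast
  then show ?thesis unfolding p_def .
qed

context group begin

lemma assemble:
  assumes x: "length x = n" "set x \<subseteq> carrier G" "0 < n"
    and all: "\<And>i j. i < n \<Longrightarrow> j < n \<Longrightarrow> rel n x i j"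
  shows "\<exists>w. braid_word_in n w \<and> braid_act G w x = x \<and> is_n_cycle n (braid_perm w)"
proof -
  define W where "W k = (SOME w. braid_word_in n w \<and> braid_act G w x = x \<and> braid_perm w = sw k (Suc k))" for k
  have Wk: "braid_word_in n (W k) \<and> braid_act G (W k) x = x \<and> braid_perm (W k) = sw k (Suc k)"
    if "Suc k < n" for k
  proof -
    have "rel n x k (Suc k)" using all that by auto
    then have "\<exists>w. braid_word_in n w \<and> braid_act G w x = x \<and> braid_perm w = sw k (Suc k)"
      unfolding rel_def by blast
    then show ?thesis unfolding W_def by (rule someI_ex)
  qed
  have ind: "braid_word_in n (concat (map W [0..<l])) \<and> braid_act G (concat (map W [0..<l])) x = x
      \<and> braid_perm (concat (map W [0..<l])) = braid_perm (map (\<lambda>k. (k, True)) [0..<l])"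
    if "l \<le> n - 1" for l
    using that
  proof (induction l)
    case 0 then show ?case by simp
  next
    case (Suc l)
    then have "Suc l < n" by auto
    then show ?case using Suc Wk[of l]
      by (simp add: braid_perm_append braid_act_append tr_sw)
  qed
  define w where "w = concat (map W [0..<n - 1])"
  have "braid_perm w = (\<lambda>y. if y < n - 1 then Suc y else if y = n - 1 then 0 else y)"
    using ind[of "n - 1"] perm_cyc[of 0 "n - 1" "\<lambda>_. True"] unfolding w_def by simp
  then show ?thesis using ind[of "n - 1"] ncycle[OF x(3)] unfolding w_def by auto
qed

end



lemma step_le: "u < v \<Longrightarrow> u * e + e \<le> v * (e::nat)"
proof -
  assume "u < v"
  then have "Suc u \<le> v" by simp
  then have "Suc u * e \<le> v * e" by (rule mult_le_mono1)
  then show ?thesis by simp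
qed

lemma length_concat_rep: "length (concat (map (\<lambda>c. replicate e c) ls)) = length ls * e"
  by (induction ls) auto

lemma concat_rep_nth:
  "p < length ls * e \<Longrightarrow> concat (map (\<lambda>c. replicate e c) ls) ! p = ls ! (p div e)"
proof (induction ls arbitrary: p)
  case Nil then show ?case by simp
next
  case (Cons c ls)
  show ?case
  proof (cases "p < e")
    case True then show ?thesis by (simp add: nth_append)
  next
    case False
    then have "p - e < length ls * e" using Cons.prems by auto
    then have "concat (map (\<lambda>c. replicate e c) ls) ! (p - e) = ls ! ((p - e) div e)" using Cons.IH by blast
    moreover have "0 < e" using Cons.prems by (cases e) auto
    then have "p div e = Suc ((p - e) div e)" using False le_div_geq[of e p] by simp
    ultimately show ?thesis using False by (simp add: nth_append)
  qed
qed

lemma set_concat_rep: "0 < e \<Longrightarrow> set (concat (map (\<lambda>c. replicate e c) ls)) = set ls"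
  by auto

context group begin

lemma tp_concat_rep:
  "(\<And>c. c \<in> set ls \<Longrightarrow> c \<in> carrier G \<and> c [^] e = \<one>) \<Longrightarrow> tuple_prod G (concat (map (\<lambda>c. replicate e c) ls)) = \<one>"
proof (induction ls)
  case Nil then show ?case by simp
next
  case (Cons c ls)
  have s1: "set (replicate e c) \<subseteq> carrier G" using Cons.prems by auto
  have s2: "set (concat (map (\<lambda>c. replicate e c) ls)) \<subseteq> carrier G" using Cons.prems by auto
  show ?case using Cons tp_append[OF s1 s2] tp_replicate[of c e] by simp
qed

lemma gen_normal:
  assumes S: "S \<subseteq> carrier G" and cl: "\<And>h s. h \<in> carrier G \<Longrightarrow> s \<in> S \<Longrightarrow> h \<otimes> s \<otimes> inv h \<in> S"
  shows "generate G S \<lhd> G"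
proof -
  have "h \<otimes> y \<otimes> inv h \<in> generate G S" if h: "h \<in> carrier G" and y: "y \<in> generate G S" for h y
    using y
  proof (induction rule: generate.induct)
    case one then show ?case using h by (simp add: generate.one)
  next
    case (incl s) then show ?case using cl h by (simp add: generate.incl)
  next
    case (inv s)
    have sc: "s \<in> carrier G" using inv S by auto
    have "h \<otimes> inv s \<otimes> inv h = inv (h \<otimes> s \<otimes> inv h)" using h sc cj_inv[of h s] by (simp add: cj_def)
    then show ?case using cl h inv by (simp add: generate.inv)
  next
    case (eng h1 h2)
    have c: "h1 \<in> carrier G" "h2 \<in> carrier G" using eng generate_in_carrier S by auto
    have "h \<otimes> (h1 \<otimes> h2) \<otimes> inv h = (h \<otimes> h1 \<otimes> inv h) \<otimes> (h \<otimes> h2 \<otimes> inv h)"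
      using cj_mult[of h h1 h2] c h by (simp add: cj_def)
    then show ?case using eng by (simp add: generate.eng)
  qed
  then show ?thesis using normal_inv_iff generate_is_subgroup[OF S] by auto
qed

definition cc :: "'a \<Rightarrow> 'a set" where "cc a = {g \<otimes> a \<otimes> inv g | g. g \<in> carrier G}"

lemma cc_elim: "c \<in> cc a \<Longrightarrow> \<exists>g\<in>carrier G. c = g \<otimes> a \<otimes> inv g"
  unfolding cc_def by blast

lemma cc_carrier: "a \<in> carrier G \<Longrightarrow> cc a \<subseteq> carrier G"
  unfolding cc_def by auto

lemma cc_self: "a \<in> carrier G \<Longrightarrow> a \<in> cc a"
  unfolding cc_def by (rule CollectI, rule exI[of _ \<one>]) simp

lemma cc_closed: "a \<in> carrier G \<Longrightarrow> c \<in> cc a \<Longrightarrow> h \<in> carrier G \<Longrightarrow> h \<otimes> c \<otimes> inv h \<in> cc a"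
proof -
  assume a: "a \<in> carrier G" and c: "c \<in> cc a" and h: "h \<in> carrier G"
  obtain g where g: "g \<in> carrier G" "c = g \<otimes> a \<otimes> inv g" using c unfolding cc_def by auto
  have "h \<otimes> c \<otimes> inv h = (h \<otimes> g) \<otimes> a \<otimes> inv (h \<otimes> g)"
    using g a h by (simp add: m_assoc inv_mult_group)
  then show ?thesis unfolding cc_def using g h by blast
qed

lemma cc_trans: "a \<in> carrier G \<Longrightarrow> c0 \<in> cc a \<Longrightarrow> c \<in> cc a \<Longrightarrow> \<exists>g\<in>carrier G. c = inv g \<otimes> c0 \<otimes> g"
proof -
  assume a: "a \<in> carrier G" and c0: "c0 \<in> cc a" and c: "c \<in> cc a"
  obtain g0 where g0: "g0 \<in> carrier G" "c0 = g0 \<otimes> a \<otimes> inv g0" using c0 unfolding cc_def by auto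
  obtain g1 where g1: "g1 \<in> carrier G" "c = g1 \<otimes> a \<otimes> inv g1" using c unfolding cc_def by auto
  have "inv (g0 \<otimes> inv g1) \<otimes> c0 \<otimes> (g0 \<otimes> inv g1) = c"
    using g0 g1 a by (simp add: m_assoc inv_mult_group)
  then show ?thesis using g0 g1 by (metis inv_closed m_closed)
qed

lemma cc_pow: "g \<in> carrier G \<Longrightarrow> a \<in> carrier G \<Longrightarrow> (g \<otimes> a \<otimes> inv g) [^] (k::nat) = g \<otimes> a [^] k \<otimes> inv g"
proof (induction k)
  case 0 then show ?case by simp
next
  case (Suc k)
  have "(g \<otimes> a [^] k \<otimes> inv g) \<otimes> (g \<otimes> a \<otimes> inv g) = g \<otimes> (a [^] k \<otimes> a) \<otimes> inv g"
    using Suc.prems by (simp add: m_assoc)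
  then show ?case using Suc by simp
qed

end



context group begin

lemma central_case:
  assumes a: "a \<in> carrier G" and n: "0 < n" "order G dvd n"
  shows "\<exists>x. length x = n \<and> set x = {a} \<and> tuple_prod G x = \<one> \<and> (\<forall>i j. i < n \<longrightarrow> j < n \<longrightarrow> rel n x i j)"
proof -
  define x where "x = replicate n a"
  obtain q where q: "n = order G * q" using n by blast
  have "tuple_prod G x = a [^] n" unfolding x_def using tp_replicate a by simp
  also have "\<dots> = (a [^] order G) [^] q" using q a by (simp add: nat_pow_pow)
  also have "\<dots> = \<one>" using pow_order_eq_1[OF a] by simp
  finally have tp: "tuple_prod G x = \<one>" .
  have sx: "set x = {a}" using n unfolding x_def by simp
  have "rel n x i j" if "i < n" "j < n" for i j
    using edge_eq[of x n i j] a that sx by (simp add: x_def)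
  then show ?thesis using tp sx by (intro exI[of _ x] conjI) (auto simp: x_def)
qed

lemma noncentral_case:
  assumes fin: "finite (carrier G)" and a: "a \<in> carrier G"
    and nc: "g0 \<in> carrier G" "g0 \<otimes> a \<otimes> inv g0 \<noteq> a"
    and n: "0 < n" "(order G)^2 dvd n"
    and gen: "generate G (cc a) = carrier G"
  shows "\<exists>x. length x = n \<and> set x = cc a \<and> tuple_prod G x = \<one> \<and> (\<forall>i j. i < n \<longrightarrow> j < n \<longrightarrow> rel n x i j)"
proof -
  define m where "m = order G"
  define e where "e = ord a"
  have m0: "0 < m" using fin order_gt_0_iff_finite m_def by auto
  have e0: "0 < e" using ord_ge_1[OF fin a] e_def by simp
  have ae: "a [^] e = \<one>" using a e_def by simp
  have edvd: "e dvd m" using ord_dvd_group_order[OF a] e_def m_def by simp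
  have ne: "e \<noteq> m"
  proof
    assume em: "e = m"
    have gsub: "generate G {a} \<subseteq> carrier G" using generate_in_carrier[of "{a}"] a by blast
    have "card (generate G {a}) = card (carrier G)"
      using generate_pow_card[OF a] em e_def m_def order_def by simp
    then have geq: "generate G {a} = carrier G" using card_subset_eq[OF fin gsub] by simp
    then have "g0 \<in> {a [^] k | k. k \<in> (UNIV::nat set)}"
      using generate_pow_on_finite_carrier[OF fin a] nc by simp
    then obtain k :: nat where gk: "g0 = a [^] k" by auto
    have com: "a [^] k \<otimes> a = a \<otimes> a [^] k" using nat_pow_Suc[of a k] nat_pow_Suc2[of a k] a by simp
    have "g0 \<otimes> a \<otimes> inv g0 = a \<otimes> g0 \<otimes> inv g0" using gk com by simp
    also have "\<dots> = a" using a nc(1) by (simp add: m_assoc)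
    finally show False using nc by simp
  qed
  have e2: "2 * e \<le> m"
  proof -
    obtain c where c: "m = e * c" using edvd by blast
    have "c \<noteq> 0" using c m0 by auto
    moreover have "c \<noteq> 1" using c ne by auto
    ultimately have "2 \<le> c" by auto
    then have "e * 2 \<le> e * c" by simp
    then show ?thesis using c by simp
  qed
  have mn: "m * m \<le> n" using n m_def by (simp add: dvd_imp_le power2_eq_square)
  have len_ok: "2 * m * e \<le> n"
  proof -
    have h1: "m * (2 * e) \<le> m * m" using e2 by (rule mult_le_mono2)
    have h2: "2 * m * e = m * (2 * e)" by (simp add: algebra_simps)
    show ?thesis using h1 h2 mn by linarith
  qed
  obtain gl where gl: "set gl = carrier G" "distinct gl" using finite_distinct_list[OF fin] by blast
  have lgl: "length gl = m" unfolding m_def order_def using distinct_card[OF gl(2)] gl(1) by simp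
  define lab where "lab = map (\<lambda>g. g \<otimes> a \<otimes> inv g) gl"
  have slab: "set lab = cc a" unfolding lab_def cc_def using gl(1) by auto
  have llab: "length lab = m" unfolding lab_def using lgl by simp
  define labs where "labs = lab @ lab"
  have llabs: "length labs = 2 * m" unfolding labs_def using llab by simp
  define x0 where "x0 = concat (map (\<lambda>c. replicate e c) labs)"
  define x where "x = x0 @ replicate (n - 2 * m * e) (lab ! 0)"
  have lx0: "length x0 = 2 * m * e" unfolding x0_def by (simp only: length_concat_rep llabs)
  have lx: "length x = n" unfolding x_def using lx0 len_ok by simp
  have ccc: "cc a \<subseteq> carrier G" using cc_carrier[OF a] .
  have lab0: "lab ! 0 \<in> cc a" using slab llab m0 nth_mem by blast
  have sx0: "set x0 = cc a" unfolding x0_def by (simp only: set_concat_rep[OF e0]) (simp add: labs_def slab)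
  have sx: "set x = cc a" unfolding x_def using sx0 lab0 by auto
  have sxc: "set x \<subseteq> carrier G" using sx ccc by simp
  have cpow: "c [^] e = \<one>" if cin: "c \<in> cc a" for c
  proof -
    obtain g where g: "g \<in> carrier G" "c = g \<otimes> a \<otimes> inv g" using cc_elim[OF cin] by blast
    then show ?thesis using cc_pow[OF g(1) a, of e] ae by simp
  qed
  have slabs: "set labs = cc a" unfolding labs_def using slab by simp
  have tp0: "tuple_prod G x0 = \<one>" unfolding x0_def
    by (rule tp_concat_rep) (use cpow ccc slabs in auto)
  have tp1: "tuple_prod G (replicate (n - 2 * m * e) (lab ! 0)) = \<one>"
  proof -
    have "m dvd n" using dvd_mult_left[of m m n] n(2) m_def by (simp add: power2_eq_square)
    then have "e dvd n" using edvd by (meson dvd_trans)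
    moreover have "e dvd 2 * m * e" by simp
    ultimately have "e dvd (n - 2 * m * e)" by simp
    then obtain q where q: "n - 2 * m * e = e * q" by blast
    have l0c: "lab ! 0 \<in> carrier G" using lab0 ccc by auto
    have "tuple_prod G (replicate (n - 2 * m * e) (lab ! 0)) = ((lab ! 0) [^] e) [^] q"
      using tp_replicate[OF l0c] q l0c by (simp add: nat_pow_pow)
    then show ?thesis using cpow[OF lab0] by simp
  qed
  have tpx: "tuple_prod G x = \<one>"
  proof -
    have s1: "set x0 \<subseteq> carrier G" using sx0 ccc by simp
    have s2: "set (replicate (n - 2 * m * e) (lab ! 0)) \<subseteq> carrier G" using lab0 ccc by auto
    show ?thesis unfolding x_def using tp_append[OF s1 s2] tp0 tp1 by simp
  qed
  have R1: "x ! q = labs ! r" if "r < 2 * m" "r * e \<le> q" "q < r * e + e" for r q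
  proof -
    have "r * e + e \<le> (2 * m) * e" using step_le[OF that(1)] .
    then have q2: "q < 2 * m * e" using that by simp
    have "q div e = r" using that by (intro div_nat_eqI) (auto simp: mult.commute)
    then show ?thesis unfolding x_def using q2 lx0 concat_rep_nth[of q labs e] llabs
      by (simp add: nth_append x0_def)
  qed
  have L1: "labs ! r = lab ! r" if "r < m" for r using that llab by (simp add: labs_def nth_append)
  have L2: "labs ! (m + r) = lab ! r" for r using llab by (simp add: labs_def nth_append)
  have X1: "x ! (r * e) = lab ! r" if "r < m" for r using R1[of r "r * e"] L1[OF that] that e0 by simp
  have X2: "x ! ((m + r) * e) = lab ! r" if "r < m" for r using R1[of "m + r" "(m + r) * e"] L2[of r] that e0 by simp
  have B0: "(m + r) * e < n" if "r < m" for r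
  proof -
    have "(m + r) * e + e \<le> (2 * m) * e" using step_le[of "m + r" "2 * m" e] that by simp
    then show ?thesis using len_ok e0 by simp
  qed
  have B1: "r * e < n" if "r < m" for r using B0[OF that] by (meson le_add2 le_less_trans mult_le_mono1)
  define good where "good c \<longleftrightarrow> (\<exists>p<n. x ! p = c \<and> rel n x 0 p)" for c
  have G1: "rel n x 0 p" if gc: "good c" and pn: "p < n" and xp: "x ! p = c" for c p
  proof -
    obtain p0 where p0: "p0 < n" "x ! p0 = c" "rel n x 0 p0" using gc unfolding good_def by blast
    have "rel n x p0 p" using edge_eq[OF lx sxc p0(1) pn] p0 xp by simp
    then show ?thesis using rel_trans p0 by blast
  qed
  have step: "\<exists>p p'. p < n \<and> p' < n \<and> x ! p = c \<and> x ! p' = inv d \<otimes> c \<otimes> d \<and> rel n x p p'"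
    if c: "c \<in> cc a" and d: "d \<in> cc a" for c d
  proof -
    define c' where "c' = inv d \<otimes> c \<otimes> d"
    have dc: "d \<in> carrier G" and cc: "c \<in> carrier G" using c d ccc by auto
    have c'cc: "c' \<in> cc a" using cc_closed[OF a c, of "inv d"] dc by (simp add: c'_def)
    obtain k where k: "k < m" "lab ! k = c" using c slab llab by (metis in_set_conv_nth)
    obtain r where r: "r < m" "lab ! r = d" using d slab llab by (metis in_set_conv_nth)
    obtain l where l: "l < m" "lab ! l = c'" using c'cc slab llab by (metis in_set_conv_nth)
    have dint1: "x ! q = d" if "r * e \<le> q" "q < r * e + e" for q
      using R1[of r q] L1[OF r(1)] r that by simp
    have dint2: "x ! q = d" if "(m + r) * e \<le> q" "q < (m + r) * e + e" for q
      using R1[of "m + r" q] L2[of r] r that by simp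
    have dinv: "d [^] (e - 1) = inv d"
    proof -
      have "d [^] (e - 1) \<otimes> d = d [^] Suc (e - 1)" using dc by simp
      also have "\<dots> = \<one>" using e0 cpow[OF d] by simp
      finally show ?thesis using dc by (intro inv_equality[symmetric]) auto
    qed
    have eq1: "c' = inv (d [^] (1::nat)) \<otimes> c \<otimes> d [^] (1::nat)" using dc by (simp add: c'_def)
    have eq2: "c = inv (d [^] (e - 1)) \<otimes> c' \<otimes> d [^] (e - 1)"
      using dinv dc cc by (simp add: c'_def m_assoc)
    have xk1: "x ! (k * e) = c" "x ! ((m + k) * e) = c" using X1 X2 k by auto
    have xl1: "x ! (l * e) = c'" "x ! ((m + l) * e) = c'" using X1 X2 l by auto
    have bk: "k * e < n" "(m + k) * e < n" "l * e < n" "(m + l) * e < n" using B0 B1 k l by auto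
    have r2: "r * e + e \<le> m * e" using step_le[OF r(1)] .
    consider "k < r" | "r < l" | "l < r" | "r < k" | "r = k \<and> r = l" by linarith
    then have "\<exists>p p'. p < n \<and> p' < n \<and> x ! p = c \<and> x ! p' = c' \<and> rel n x p p'"
    proof cases
      case 1
      have "k * e + e \<le> r * e" using step_le[OF 1] .
      then have i: "k * e < r * e" using e0 by linarith
      have "m * e \<le> (m + l) * e" by simp
      then have s: "r * e + 1 \<le> (m + l) * e" using r2 e0 by linarith
      have iv: "x ! q = d" if "r * e \<le> q" "q < r * e + 1" for q using that e0 by (intro dint1) linarith+
      have eqj: "x ! ((m + l) * e) = inv (d [^] (1::nat)) \<otimes> x ! (k * e) \<otimes> d [^] (1::nat)"
        unfolding xl1(2) xk1(1) by (rule eq1)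
      have "rel n x (k * e) ((m + l) * e)" using edge_int[OF lx sxc i s bk(4) dc iv eqj] .
      then show ?thesis using bk xk1 xl1 by blast
    next
      case 2
      have "k * e + e \<le> (m + r) * e" using step_le[of k "m + r" e] k by simp
      then have i: "k * e < (m + r) * e" using e0 by linarith
      have "(m + r) * e + e \<le> (m + l) * e" using step_le[of "m + r" "m + l" e] 2 by simp
      then have s: "(m + r) * e + 1 \<le> (m + l) * e" using e0 by linarith
      have iv: "x ! q = d" if "(m + r) * e \<le> q" "q < (m + r) * e + 1" for q using that e0 by (intro dint2) linarith+
      have eqj: "x ! ((m + l) * e) = inv (d [^] (1::nat)) \<otimes> x ! (k * e) \<otimes> d [^] (1::nat)"
        unfolding xl1(2) xk1(1) by (rule eq1)
      have "rel n x (k * e) ((m + l) * e)" using edge_int[OF lx sxc i s bk(4) dc iv eqj] .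
      then show ?thesis using bk xk1 xl1 by blast
    next
      case 3
      have "l * e + e \<le> r * e" using step_le[OF 3] .
      then have i: "l * e < r * e" using e0 by linarith
      have "m * e \<le> (m + k) * e" by simp
      then have s: "r * e + (e - 1) \<le> (m + k) * e" using r2 e0 by linarith
      have iv: "x ! q = d" if "r * e \<le> q" "q < r * e + (e - 1)" for q using that e0 by (intro dint1) linarith+
      have eqj: "x ! ((m + k) * e) = inv (d [^] (e - 1)) \<otimes> x ! (l * e) \<otimes> d [^] (e - 1)"
        unfolding xl1(1) xk1(2) by (rule eq2)
      have "rel n x (l * e) ((m + k) * e)" using edge_int[OF lx sxc i s bk(2) dc iv eqj] .
      then show ?thesis using rel_sym bk xk1 xl1 by blast
    next
      case 4
      have "l * e + e \<le> (m + r) * e" using step_le[of l "m + r" e] l by simp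
      then have i: "l * e < (m + r) * e" using e0 by linarith
      have "(m + r) * e + e \<le> (m + k) * e" using step_le[of "m + r" "m + k" e] 4 by simp
      then have s: "(m + r) * e + (e - 1) \<le> (m + k) * e" using e0 by linarith
      have iv: "x ! q = d" if "(m + r) * e \<le> q" "q < (m + r) * e + (e - 1)" for q using that e0 by (intro dint2) linarith+
      have eqj: "x ! ((m + k) * e) = inv (d [^] (e - 1)) \<otimes> x ! (l * e) \<otimes> d [^] (e - 1)"
        unfolding xl1(1) xk1(2) by (rule eq2)
      have "rel n x (l * e) ((m + k) * e)" using edge_int[OF lx sxc i s bk(2) dc iv eqj] .
      then show ?thesis using rel_sym bk xk1 xl1 by blast
    next
      case 5
      then have "c' = c" using k l by auto
      then show ?thesis using rel_refl bk xk1 by blast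
    qed
    then show ?thesis unfolding c'_def .
  qed
  have clos: "\<forall>c \<in> cc a. good c \<longrightarrow> good (inv g \<otimes> c \<otimes> g)" if "g \<in> generate G (cc a)" for g
    using that
  proof (induction rule: generate.induct)
    case one then show ?case using ccc by auto
  next
    case (incl d)
    show ?case
    proof (intro ballI impI)
      fix c assume c: "c \<in> cc a" and gc: "good c"
      obtain p p' where pp: "p < n" "p' < n" "x ! p = c" "x ! p' = inv d \<otimes> c \<otimes> d" "rel n x p p'"
        using step[OF c incl] by blast
      have "rel n x 0 p" using G1[OF gc pp(1) pp(3)] .
      then have "rel n x 0 p'" using rel_trans pp(5) by blast
      then show "good (inv d \<otimes> c \<otimes> d)" unfolding good_def using pp by blast
    qed
  next
    case (inv d)
    have dc: "d \<in> carrier G" using inv ccc by auto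
    show ?case
    proof (intro ballI impI)
      fix c assume c: "c \<in> cc a" and gc: "good c"
      have cc: "c \<in> carrier G" using c ccc by auto
      define c2 where "c2 = d \<otimes> c \<otimes> inv d"
      have c2cc: "c2 \<in> cc a" using cc_closed[OF a c dc] c2_def by simp
      have hback: "inv d \<otimes> c2 \<otimes> d = c" using dc cc by (simp add: c2_def m_assoc)
      obtain p p' where pp: "p < n" "p' < n" "x ! p = c2" "x ! p' = c" "rel n x p p'"
        using step[OF c2cc inv] hback by metis
      have "rel n x 0 p'" using G1[OF gc pp(2) pp(4)] .
      then have "rel n x 0 p" using rel_trans rel_sym pp(5) by blast
      then have "good c2" unfolding good_def using pp by blast
      then show "good (inv (inv d) \<otimes> c \<otimes> inv d)" using dc by (simp add: c2_def)
    qed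
  next
    case (eng g1 g2)
    have g1c: "g1 \<in> carrier G" and g2c: "g2 \<in> carrier G"
      using eng.hyps generate_in_carrier[OF ccc] by auto
    show ?case
    proof (intro ballI impI)
      fix c assume c: "c \<in> cc a" and gc: "good c"
      have cc: "c \<in> carrier G" using c ccc by auto
      have c1: "inv g1 \<otimes> c \<otimes> g1 \<in> cc a" using cc_closed[OF a c, of "inv g1"] g1c by simp
      have "good (inv g1 \<otimes> c \<otimes> g1)" using eng.IH(1) c gc by blast
      then have "good (inv g2 \<otimes> (inv g1 \<otimes> c \<otimes> g1) \<otimes> g2)" using eng.IH(2) c1 by blast
      moreover have "inv g2 \<otimes> (inv g1 \<otimes> c \<otimes> g1) \<otimes> g2 = inv (g1 \<otimes> g2) \<otimes> c \<otimes> (g1 \<otimes> g2)"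
        using g1c g2c cc by (simp add: m_assoc inv_mult_group)
      ultimately show "good (inv (g1 \<otimes> g2) \<otimes> c \<otimes> (g1 \<otimes> g2))" by simp
    qed
  qed
  have x0cc: "x ! 0 \<in> cc a" using sx lx n(1) nth_mem by blast
  have g0: "good (x ! 0)" unfolding good_def using n(1) rel_refl by blast
  have allgood: "good c" if cin: "c \<in> cc a" for c
  proof -
    obtain g where g: "g \<in> carrier G" "c = inv g \<otimes> x ! 0 \<otimes> g" using cc_trans[OF a x0cc cin] by blast
    then show ?thesis using clos[of g] gen x0cc g0 by auto
  qed
  have "rel n x i j" if "i < n" "j < n" for i j
  proof -
    have "x ! i \<in> cc a" "x ! j \<in> cc a" using sx lx that nth_mem by blast+
    then have "rel n x 0 i" "rel n x 0 j" using allgood G1 that by blast+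
    then show ?thesis using rel_trans rel_sym by blast
  qed
  then show ?thesis using lx sx tpx by blast
qed

end



context simple_group begin

lemma exists_tuple:
  assumes fin: "finite (carrier G)" and n: "0 < n" "(order G)^2 dvd n"
  shows "\<exists>x. x \<in> Sur1 G n \<and> (\<forall>i j. i < n \<longrightarrow> j < n \<longrightarrow> rel n x i j)"
proof -
  obtain a where a: "a \<in> carrier G" "a \<noteq> \<one>" using simple_not_triv one_closed by blast
  have ccc: "cc a \<subseteq> carrier G" using cc_carrier[OF a(1)] .
  have nrm: "generate G (cc a) \<lhd> G" using gen_normal[OF ccc] cc_closed[OF a(1)] by blast
  have "a \<in> generate G (cc a)" using cc_self[OF a(1)] by (rule generate.incl)
  then have gen: "generate G (cc a) = carrier G" using no_real_normal_subgroup[OF nrm] a(2) by auto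
  have odvd: "order G dvd n" using n(2) dvd_mult_left[of "order G" "order G" n] by (simp add: power2_eq_square)
  show ?thesis
  proof (cases "\<forall>g \<in> carrier G. g \<otimes> a \<otimes> inv g = a")
    case True
    have cca: "cc a = {a}" using True cc_self[OF a(1)] unfolding cc_def by auto
    obtain x where x: "length x = n" "set x = {a}" "tuple_prod G x = \<one>" "\<forall>i j. i < n \<longrightarrow> j < n \<longrightarrow> rel n x i j"
      using central_case[OF a(1) n(1) odvd] by blast
    have "x \<in> Sur1 G n" unfolding Sur1_def using x gen cca a by auto
    then show ?thesis using x by blast
  next
    case False
    then obtain g0 where g0: "g0 \<in> carrier G" "g0 \<otimes> a \<otimes> inv g0 \<noteq> a" by blast
    obtain x where x: "length x = n" "set x = cc a" "tuple_prod G x = \<one>" "\<forall>i j. i < n \<longrightarrow> j < n \<longrightarrow> rel n x i j"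
      using noncentral_case[OF fin a(1) g0 n gen] by blast
    have "x \<in> Sur1 G n" unfolding Sur1_def using x gen ccc by auto
    then show ?thesis using x by blast
  qed
qed

end

theorem corollary4p46:
  fixes G :: "('a, 'b) monoid_scheme"
  assumes "simple_group G" and "finite (carrier G)"
  shows "\<forall>n::nat. n > 0 \<and> (order G)^2 dvd n \<longrightarrow>
    (\<exists>s \<in> Sur1_quot G n. \<exists>w. braid_word_in n w \<and> braid_act_orbit G w s = s
        \<and> is_n_cycle n (braid_perm w))"
proof (intro allI impI)
  fix n :: nat assume n: "n > 0 \<and> (order G)^2 dvd n"
  interpret simple_group G by fact
  obtain x where x: "x \<in> Sur1 G n" "\<forall>i j. i < n \<longrightarrow> j < n \<longrightarrow> rel n x i j"
    using exists_tuple[OF assms(2)] n by blast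
  have lx: "length x = n" and sx: "set x \<subseteq> carrier G" using x(1) unfolding Sur1_def by auto
  obtain w where w: "braid_word_in n w" "braid_act G w x = x" "is_n_cycle n (braid_perm w)"
    using assemble[OF lx sx] n x(2) by blast
  define s where "s = conj_orbit G x"
  have sq: "s \<in> Sur1_quot G n" unfolding s_def Sur1_quot_def using x(1) by blast
  have fixy: "braid_act G w y = y" if ys: "y \<in> s" for y
  proof -
    obtain h where h: "h \<in> carrier G" "y = map (\<lambda>z. h \<otimes>\<^bsub>G\<^esub> z \<otimes>\<^bsub>G\<^esub> inv\<^bsub>G\<^esub> h) x"
      using ys unfolding s_def conj_orbit_def by blast
    have ym: "y = map (cj h) x" unfolding h(2) by (rule map_cong) (simp_all add: cj_def)
    show ?thesis unfolding ym using act_conj[of x w h] w lx sx h by simp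
  qed
  have "braid_act G w ` s = (\<lambda>y. y) ` s" by (rule image_cong) (simp_all add: fixy)
  then have orb: "braid_act_orbit G w s = s" unfolding braid_act_orbit_def by simp
  show "\<exists>s \<in> Sur1_quot G n. \<exists>w. braid_word_in n w \<and> braid_act_orbit G w s = s
        \<and> is_n_cycle n (braid_perm w)"
    using sq orb w by blast
qed

end
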